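(* Let $M$ be a proper metric space and $A_0,\dots,A_n$ a coarsely transverse $n$-partition of $M$. Then there exists a coarse map $f:M\to\mathrm{C}^n$ such that $f^{-1}(A_i^{\mathrm{std}})=A_i$ for $i=0,\dots,n$.
   Context: For $Y\subseteq M$, $Y_R=\{x:d(x,Y)\le R\}$. A coarsely transverse $n$-partition is a collection of pairwise disjoint Borel sets $A_0,\dots,A_n$ with union $M$ such that $(A_0)_R\cap\dots\cap(A_n)_R$ is bounded for all $R\ge0$. $\mathrm{C}^n$ is the boundary of $\mathbb{R}^{n+1}_{\ge0}=\{x\in\mathbb{R}^{n+1}: x_a\ge0\ \forall a\}$, i.e. the set of $x\in\mathbb{R}^{n+1}_{\ge0}$ with $x_a=0$ for some $a$, with the max metric. Its standard partition is $A_i^{\mathrm{std}}=\{x\in\mathrm{C}^n: x_0,\dots,x_{i-1}>0,\ x_i=0\}$. A coarse map is a Borel map that is controlled (for each $r>0$ there is $R>0$ with $d(x,y)\le r\Rightarrow d(f(x),f(y))\le R$) and proper (preimages of bounded sets are bounded). *)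

theory Defs
  imports "HOL-Analysis.Analysis"
begin

definition proper_metric_space :: "'a::metric_space itself \<Rightarrow> bool" where
  "proper_metric_space _ \<longleftrightarrow> (\<forall>(x::'a) r. compact (cball x r))"

text \<open>Closed R-neighbourhood Y_R = {x. d(x,Y) \<le> R}, with d(x,{}) = infinity (so {}_R = {}).\<close>
definition nbhd :: "'a::metric_space set \<Rightarrow> real \<Rightarrow> 'a set" where
  "nbhd Y R = {x. Y \<noteq> {} \<and> infdist x Y \<le> R}"

text \<open>Coarsely transverse partition indexed by a finite linearly ordered type 'i
  (standing for {0,...,n}).\<close>
definition coarsely_transverse_partition :: "('i::{finite,linorder} \<Rightarrow> 'a::metric_space set) \<Rightarrow> bool" where
  "coarsely_transverse_partition A \<longleftrightarrow>
     (\<forall>i. A i \<in> sets borel) \<and>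
     (\<forall>i j. i \<noteq> j \<longrightarrow> A i \<inter> A j = {}) \<and>
     (\<Union>i. A i) = UNIV \<and>
     (\<forall>R\<ge>0. bounded (\<Inter>i. nbhd (A i) R))"

definition dmax :: "real^'i::finite \<Rightarrow> real^'i \<Rightarrow> real" where
  "dmax x y = Max (range (\<lambda>a. \<bar>x $ a - y $ a\<bar>))"

definition Ccone :: "(real^'i::finite) set" where
  "Ccone = {x. (\<forall>a. 0 \<le> x $ a) \<and> (\<exists>a. x $ a = 0)}"

definition Astd :: "'i::{finite,linorder} \<Rightarrow> (real^'i::{finite,linorder}) set" where
  "Astd i = {x \<in> Ccone. (\<forall>j<i. 0 < x $ j) \<and> x $ i = 0}"

definition coarse_map_to_C :: "('a::metric_space \<Rightarrow> real^'i::finite) \<Rightarrow> bool" where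
  "coarse_map_to_C f \<longleftrightarrow>
     (\<forall>x. f x \<in> Ccone) \<and>
     f \<in> borel_measurable borel \<and>
     (\<forall>r>0. \<exists>R>0. \<forall>x y. dist x y \<le> r \<longrightarrow> dmax (f x) (f y) \<le> R) \<and>
     (\<forall>B. B \<subseteq> Ccone \<longrightarrow> (\<exists>c R. \<forall>y\<in>B. dmax c y \<le> R) \<longrightarrow> bounded (f -` B))"

end

theory Submission
  imports Defs
begin

lemma dmax_ge: "\<bar>x $ a - y $ a\<bar> \<le> dmax x y"
  unfolding dmax_def by (rule Max_ge) auto

lemma dmax_le: "(\<And>a. \<bar>(x::real^'i::finite) $ a - y $ a\<bar> \<le> R) \<Longrightarrow> dmax x y \<le> R"
  unfolding dmax_def by (subst Max_le_iff) auto

lemma meas_vec: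
  fixes f :: "'a::metric_space \<Rightarrow> real^'i::finite"
  assumes "\<And>a. (\<lambda>x. f x $ a) \<in> borel_measurable borel"
  shows "f \<in> borel_measurable borel"
proof (rule borel_measurable_euclidean_space[THEN iffD2], intro ballI)
  fix i :: "real^'i" assume "i \<in> Basis"
  then obtain a where i: "i = axis a 1" by (auto simp: Basis_vec_def)
  have "(\<lambda>x. f x \<bullet> i) = (\<lambda>x. f x $ a)" unfolding i by (simp add: cart_eq_inner_axis)
  then show "(\<lambda>x. f x \<bullet> i) \<in> borel_measurable borel" using assms by simp
qed

theorem lemma5p10:
  fixes A :: "'i::{finite,linorder} \<Rightarrow> 'a::metric_space set"
  assumes "proper_metric_space TYPE('a)"
    and "coarsely_transverse_partition A"
  shows "\<exists>f :: 'a \<Rightarrow> real^'i::{finite,linorder}. coarse_map_to_C f \<and> (\<forall>i. f -` Astd i = A i)"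
proof -
  obtain x0 :: 'a where True by blast
  have Ab: "\<And>i. A i \<in> sets borel" and Ad: "\<And>i j. i \<noteq> j \<Longrightarrow> A i \<inter> A j = {}"
    and Au: "(\<Union>i. A i) = UNIV" and Abd: "\<And>R. R \<ge> 0 \<Longrightarrow> bounded (\<Inter>i. nbhd (A i) R)"
    using assms(2) unfolding coarsely_transverse_partition_def by auto
  define g where "g a x = (if A a = {} then dist x x0 else infdist x (A a)) + (if x \<in> A a then 0 else (1::real))" for a x
  define f where "f x = (\<chi> a. g a x)" for x
  have fa: "f x $ a = g a x" for x a by (simp add: f_def)
  have gnn: "g a x \<ge> 0" for a x by (simp add: g_def infdist_nonneg)
  have gpos: "x \<notin> A a \<Longrightarrow> g a x \<ge> 1" for a x
    by (auto simp: g_def infdist_nonneg)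
  have gz: "g a x = 0 \<longleftrightarrow> x \<in> A a" for a x
  proof
    assume "g a x = 0" then show "x \<in> A a" using gpos[of x a] by (cases "x \<in> A a") auto
  next
    assume "x \<in> A a" then show "g a x = 0" by (auto simp: g_def)
  qed
  have inA: "\<exists>i. x \<in> A i" for x using Au by auto
  have uniq: "x \<in> A i \<Longrightarrow> x \<in> A j \<Longrightarrow> i = j" for x i j using Ad by blast
  have pre: "f -` Astd i = A i" for i
  proof safe
    fix x assume "f x \<in> Astd i"
    then have "g i x = 0" by (simp add: Astd_def fa)
    then show "x \<in> A i" using gz by simp
  next
    fix x assume x: "x \<in> A i"
    have "f x \<in> Ccone" unfolding Ccone_def using x gz gnn by (auto simp: fa)
    moreover have "0 < f x $ j" if "j < i" for j
    proof -
      have "x \<notin> A j" using uniq[of x i j] x that by auto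
      then show ?thesis using gpos[of x j] by (simp add: fa)
    qed
    ultimately have "f x \<in> Astd i" using x gz by (auto simp: Astd_def fa)
    then show "x \<in> f -` Astd i" by simp
  qed
  have inC: "f x \<in> Ccone" for x
    using inA[of x] gz gnn by (auto simp: Ccone_def fa)
  have meas: "f \<in> borel_measurable borel"
  proof (rule meas_vec)
    fix a
    have "(\<lambda>x. g a x) \<in> borel_measurable borel"
      unfolding g_def
      apply (intro borel_measurable_add)
      subgoal proof (cases "A a = {}")
        case True
        have "(\<lambda>x. dist x x0) \<in> borel_measurable borel"
          by (intro borel_measurable_continuous_onI continuous_intros)
        then show ?thesis using True by simp
      next
        case False
        have "(\<lambda>x. infdist x (A a)) \<in> borel_measurable borel"
          by (intro borel_measurable_continuous_onI continuous_intros)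
        then show ?thesis using False by simp
      qed
      subgoal using Ab[of a] by measurable
      done
    then show "(\<lambda>x. f x $ a) \<in> borel_measurable borel" by (simp add: fa)
  qed
  have gctl: "\<bar>g a x - g a y\<bar> \<le> 2 * dist x y + 1" for a x y
  proof -
    have "\<bar>(if A a = {} then dist x x0 else infdist x (A a)) - (if A a = {} then dist y x0 else infdist y (A a))\<bar> \<le> dist x y"
    proof (cases "A a = {}")
      case True
      then show ?thesis using dist_triangle3[of x x0 y] dist_triangle3[of y x0 x] by (simp add: dist_commute)
    next
      case False
      then show ?thesis using infdist_triangle_abs[of x "A a" y] by simp
    qed
    moreover have "\<bar>(if x \<in> A a then 0 else (1::real)) - (if y \<in> A a then 0 else 1)\<bar> \<le> 1" by auto
    ultimately show ?thesis unfolding g_def by linarith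
  qed
  have ctl: "\<forall>r>0. \<exists>R>0. \<forall>x y. dist x y \<le> r \<longrightarrow> dmax (f x) (f y) \<le> R"
  proof (intro allI impI)
    fix r :: real assume "r > 0"
    show "\<exists>R>0. \<forall>x y. dist x y \<le> r \<longrightarrow> dmax (f x) (f y) \<le> R"
    proof (intro exI[of _ "2*r+1"] conjI allI impI)
      show "2*r+1 > 0" using \<open>r>0\<close> by simp
      fix x y :: 'a assume "dist x y \<le> r"
      show "dmax (f x) (f y) \<le> 2*r+1"
      proof (rule dmax_le)
        fix a show "\<bar>f x $ a - f y $ a\<bar> \<le> 2*r+1"
          using gctl[of a x y] \<open>dist x y \<le> r\<close> by (simp add: fa)
      qed
    qed
  qed
  have prp: "bounded (f -` B)" if hB: "B \<subseteq> Ccone" and hE: "\<exists>c R. \<forall>y\<in>B. dmax c y \<le> R" for B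
  proof -
    obtain c R where cR: "\<And>y. y \<in> B \<Longrightarrow> dmax c y \<le> R" using hE by blast
    have le: "g a x \<le> c $ a + R" if "x \<in> f -` B" for a x
      using dmax_ge[of c a "f x"] cR[of "f x"] that by (auto simp: fa)
    show ?thesis
    proof (cases "\<exists>a. A a = {}")
      case True
      then obtain a where a: "A a = {}" by blast
      have "f -` B \<subseteq> cball x0 (c $ a + R)"
      proof
        fix x assume "x \<in> f -` B"
        then have "g a x \<le> c $ a + R" by (rule le)
        then show "x \<in> cball x0 (c $ a + R)" using a by (simp add: g_def dist_commute)
      qed
      then show ?thesis using bounded_cball bounded_subset by blast
    next
      case False
      define K where "K = (\<Sum>a\<in>UNIV. \<bar>c $ a\<bar>) + \<bar>R\<bar>"
      have K0: "K \<ge> 0" unfolding K_def by (simp add: sum_nonneg)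
      have "f -` B \<subseteq> (\<Inter>i. nbhd (A i) K)"
      proof
        fix x assume x: "x \<in> f -` B"
        show "x \<in> (\<Inter>i. nbhd (A i) K)"
        proof
          fix a
          have ca: "\<bar>c $ a\<bar> \<le> (\<Sum>a\<in>UNIV. \<bar>c $ a\<bar>)"
            by (rule member_le_sum) auto
          have "infdist x (A a) \<le> g a x" using False by (simp add: g_def)
          also have "\<dots> \<le> c $ a + R" using le x by blast
          also have "\<dots> \<le> K" using ca unfolding K_def by linarith
          finally show "x \<in> nbhd (A a) K" using False by (simp add: nbhd_def)
        qed
      qed
      then show ?thesis using Abd[OF K0] bounded_subset by blast
    qed
  qed
  have "coarse_map_to_C f"
    unfolding coarse_map_to_C_def using inC meas ctl prp by blast
  then show ?thesis using pre by blast
qed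

end
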